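(* Let $n\ge1$, $\omega\in(0,1)$, and let $B_1,\dots,B_n$ be independent real-valued service times with finite means $\mu_i$ and variances, satisfying $B_1\le_{\mathrm{dil}}\cdots\le_{\mathrm{dil}}B_n$. Then there is a sequence $\tau\in\mathsf S_n$ minimizing $C(\tau,\boldsymbol\mu,\omega)$ over $\mathsf S_n$ that satisfies $\tau(n)=n$.
   Context: Appointment model: a sequence is a permutation $\tau\in\mathsf S_n$, $\tau(i)$ the patient in slot $i$; a schedule is $\boldsymbol x=(x_1,\dots,x_n)$, $x_j$ the interarrival time between patient $j$ and the next patient; the mean-based schedule is $\boldsymbol\mu=(\mu_1,\dots,\mu_n)$. Waiting and idle times: $W_1=I_1=0$, $W_{i+1}=(W_i+B_{\tau(i)}-x_{\tau(i)})^+$, $I_{i+1}=(W_i+B_{\tau(i)}-x_{\tau(i)})^-$, $a^+=\max\{0,a\}$, $a^-=\max\{0,-a\}$. Cost $C(\tau,\boldsymbol x,\omega)=\omega\sum_{i=1}^n\mathbb EI_i+(1-\omega)\sum_{i=1}^n\mathbb EW_i$. $X\le_{\mathrm{cx}}Y$ means $\mathbb E\phi(X)\le\mathbb E\phi(Y)$ for all convex $\phi$ for which the expectations exist; $X\le_{\mathrm{dil}}Y$ means $X-\mathbb EX\le_{\mathrm{cx}}Y-\mathbb EY$. *)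

theory Defs
  imports "HOL-Probability.Probability" "HOL-Combinatorics.Permutations"
begin

text \<open>Pathwise waiting times, 1-indexed: wt tau x b i is W_i for i \<ge> 1,
  with W_1 = 0 and W_(i+1) = (W_i + b(tau i) - x(tau i))^+.
  Here b j is the realised service time of patient j, x j the interarrival time after patient j.\<close>
fun wt :: "(nat \<Rightarrow> nat) \<Rightarrow> (nat \<Rightarrow> real) \<Rightarrow> (nat \<Rightarrow> real) \<Rightarrow> nat \<Rightarrow> real" where
  "wt tau x b 0 = 0"
| "wt tau x b (Suc i) =
     (if i = 0 then 0 else max 0 (wt tau x b i + b (tau i) - x (tau i)))"

fun idl :: "(nat \<Rightarrow> nat) \<Rightarrow> (nat \<Rightarrow> real) \<Rightarrow> (nat \<Rightarrow> real) \<Rightarrow> nat \<Rightarrow> real" where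
  "idl tau x b 0 = 0"
| "idl tau x b (Suc i) =
     (if i = 0 then 0 else max 0 (- (wt tau x b i + b (tau i) - x (tau i))))"

definition cost :: "'s measure \<Rightarrow> (nat \<Rightarrow> 's \<Rightarrow> real) \<Rightarrow> nat \<Rightarrow> (nat \<Rightarrow> nat)
    \<Rightarrow> (nat \<Rightarrow> real) \<Rightarrow> real \<Rightarrow> real" where
  "cost M B n tau x \<omega> =
     \<omega> * (\<Sum>i=1..n. integral\<^sup>L M (\<lambda>s. idl tau x (\<lambda>j. B j s) i))
     + (1 - \<omega>) * (\<Sum>i=1..n. integral\<^sup>L M (\<lambda>s. wt tau x (\<lambda>j. B j s) i))"

definition cx_le :: "'s measure \<Rightarrow> ('s \<Rightarrow> real) \<Rightarrow> ('s \<Rightarrow> real) \<Rightarrow> bool" where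
  "cx_le M X Y \<longleftrightarrow>
     (\<forall>\<phi> :: real \<Rightarrow> real. convex_on UNIV \<phi> \<longrightarrow>
        integrable M (\<lambda>s. \<phi> (X s)) \<longrightarrow> integrable M (\<lambda>s. \<phi> (Y s)) \<longrightarrow>
        integral\<^sup>L M (\<lambda>s. \<phi> (X s)) \<le> integral\<^sup>L M (\<lambda>s. \<phi> (Y s)))"

definition dil_le :: "'s measure \<Rightarrow> ('s \<Rightarrow> real) \<Rightarrow> ('s \<Rightarrow> real) \<Rightarrow> bool" where
  "dil_le M X Y \<longleftrightarrow>
     cx_le M (\<lambda>s. X s - integral\<^sup>L M X) (\<lambda>s. Y s - integral\<^sup>L M Y)"

end

theory Submission
  imports Defs
begin

fun Wy :: "(nat \<Rightarrow> real) \<Rightarrow> nat \<Rightarrow> real" where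
  "Wy y 0 = 0"
| "Wy y (Suc i) = (if i = 0 then 0 else max 0 (Wy y i + y i))"

lemma wt_Wy: "wt tau x b i = Wy (\<lambda>j. b (tau j) - x (tau j)) i"
  by (induction i) auto

lemma idl_Wy: "idl tau x b (Suc i) = (if i = 0 then 0 else
   Wy (\<lambda>j. b (tau j) - x (tau j)) (Suc i) - Wy (\<lambda>j. b (tau j) - x (tau j)) i - (b (tau i) - x (tau i)))"
  by (auto simp: wt_Wy)

lemma idl_sum: "(\<Sum>i=1..Suc m. idl tau x b i) = Wy (\<lambda>j. b (tau j) - x (tau j)) (Suc m)
    - (\<Sum>j=1..<Suc m. b (tau j) - x (tau j))"
proof (induction m)
  case 0
  then show ?case by simp
next
  case (Suc m)
  have "(\<Sum>i=1..Suc (Suc m). idl tau x b i) = (\<Sum>i=1..Suc m. idl tau x b i) + idl tau x b (Suc (Suc m))"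
    by simp
  also have "\<dots> = Wy (\<lambda>j. b (tau j) - x (tau j)) (Suc (Suc m)) - (\<Sum>j=1..<Suc (Suc m). b (tau j) - x (tau j))"
    unfolding Suc idl_Wy by (simp add: Wy.simps(2)[of _ "Suc m"] del: Wy.simps)
  finally show ?case .
qed

lemma Wy_nonneg: "0 \<le> Wy y i"
  by (induction i) auto

lemma Wy_cong: "(\<And>j. 1 \<le> j \<Longrightarrow> j < i \<Longrightarrow> y j = y' j) \<Longrightarrow> Wy y i = Wy y' i"
  by (induction i) auto

lemma Wy_bound: "Wy y i \<le> (\<Sum>j<i. \<bar>y j\<bar>)"
proof (induction i)
  case 0 then show ?case by simp
next
  case (Suc i)
  have "0 \<le> (\<Sum>j<Suc i. \<bar>y j\<bar>)" by (simp add: sum_nonneg)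
  moreover have "Wy y i + y i \<le> (\<Sum>j<Suc i. \<bar>y j\<bar>)" using Suc by simp
  ultimately show ?case by auto
qed

lemma Wy_mono: "a \<le> b \<Longrightarrow> Wy (y(k:=a)) i \<le> Wy (y(k:=b)) i"
proof (induction i)
  case 0 then show ?case by simp
next
  case (Suc i)
  then show ?case by (cases "i = k") (auto simp: max_def)
qed

lemma max0_cvx:
  fixes u A B X :: real
  assumes "0 \<le> u" "u \<le> 1" "X \<le> (1-u)*A + u*B"
  shows "max 0 X \<le> (1-u) * max 0 A + u * max 0 B"
proof -
  have "(1-u)*A \<le> (1-u) * max 0 A" using assms by (intro mult_left_mono) auto
  moreover have "u*B \<le> u * max 0 B" using assms by (intro mult_left_mono) auto
  moreover have "0 \<le> (1-u) * max 0 A + u * max 0 B" using assms by simp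
  ultimately show ?thesis using assms by auto
qed

lemma Wy_cvx:
  assumes "0 \<le> u" "u \<le> 1"
  shows "Wy (y(k:=(1-u)*a+u*b)) i \<le> (1-u) * Wy (y(k:=a)) i + u * Wy (y(k:=b)) i"
proof (induction i)
  case 0 then show ?case by simp
next
  case (Suc i)
  show ?case
  proof (cases "i = 0")
    case True then show ?thesis by simp
  next
    case False
    have key: "Wy (y(k:=(1-u)*a+u*b)) i + (y(k:=(1-u)*a+u*b)) i
       \<le> (1-u) * (Wy (y(k:=a)) i + (y(k:=a)) i) + u * (Wy (y(k:=b)) i + (y(k:=b)) i)"
    proof (cases "i = k")
      case True
      then have "(y(k:=(1-u)*a+u*b)) i = (1-u)*a+u*b" "(y(k:=a)) i = a" "(y(k:=b)) i = b" by auto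
      then show ?thesis using Suc.IH by (simp add: algebra_simps del: fun_upd_apply)
    next
      case False
      then have "(y(k:=(1-u)*a+u*b)) i = y i" "(y(k:=a)) i = y i" "(y(k:=b)) i = y i" by auto
      then show ?thesis using Suc.IH by (simp add: algebra_simps del: fun_upd_apply)
    qed
    have e: "\<And>c. Wy (y(k:=c)) (Suc i) = max 0 (Wy (y(k:=c)) i + (y(k:=c)) i)"
      using False by (simp del: fun_upd_apply)
    show ?thesis unfolding e using max0_cvx[OF assms key] .
  qed
qed

lemma Wy_measurable:
  assumes "\<And>j. (\<lambda>x. Y x j) \<in> borel_measurable N"
  shows "(\<lambda>x. Wy (Y x) i) \<in> borel_measurable N"
proof (induction i)
  case 0 then show ?case by simp
next
  case (Suc i)
  then show ?case using assms by (cases "i = 0") auto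
qed



lemma Wy_bound2: "Wy y i \<le> (\<Sum>j\<in>{1..<i}. \<bar>y j\<bar>)"
proof (induction i)
  case 0 then show ?case by simp
next
  case (Suc i)
  show ?case
  proof (cases "i = 0")
    case True then show ?thesis by simp
  next
    case False
    then have e: "{1..<Suc i} = insert i {1..<i}" by auto
    have "0 \<le> (\<Sum>j\<in>{1..<Suc i}. \<bar>y j\<bar>)" by (simp add: sum_nonneg)
    moreover have "Wy y i + y i \<le> (\<Sum>j\<in>{1..<Suc i}. \<bar>y j\<bar>)" using Suc unfolding e by simp
    ultimately show ?thesis using False by auto
  qed
qed

definition GG :: "real \<Rightarrow> nat \<Rightarrow> (nat \<Rightarrow> real) \<Rightarrow> real" where
  "GG \<omega> n y = \<omega> * Wy y n + (1 - \<omega>) * (\<Sum>i=1..n. Wy y i)"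

lemma GG_nonneg: "0 \<le> \<omega> \<Longrightarrow> \<omega> \<le> 1 \<Longrightarrow> 0 \<le> GG \<omega> n y"
  unfolding GG_def by (intro add_nonneg_nonneg mult_nonneg_nonneg sum_nonneg) (auto simp: Wy_nonneg)

lemma GG_bound:
  assumes "0 \<le> \<omega>" "\<omega> \<le> 1"
  shows "GG \<omega> n y \<le> real (Suc n) * (\<Sum>j\<in>{1..<n}. \<bar>y j\<bar>)"
proof -
  let ?S = "(\<Sum>j\<in>{1..<n}. \<bar>y j\<bar>)"
  have S0: "0 \<le> ?S" by (simp add: sum_nonneg)
  have W: "Wy y i \<le> ?S" if "i \<le> n" for i
  proof -
    have "Wy y i \<le> (\<Sum>j\<in>{1..<i}. \<bar>y j\<bar>)" by (rule Wy_bound2)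
    also have "\<dots> \<le> ?S" using that by (intro sum_mono2) auto
    finally show ?thesis .
  qed
  have "\<omega> * Wy y n \<le> 1 * ?S" using assms W[of n] S0 Wy_nonneg[of y n]
    by (intro mult_mono) auto
  moreover have "(\<Sum>i=1..n. Wy y i) \<le> (\<Sum>i=1..n. ?S)" using W by (intro sum_mono) auto
  then have "(1 - \<omega>) * (\<Sum>i=1..n. Wy y i) \<le> 1 * (real n * ?S)" using assms S0
    by (intro mult_mono) (auto simp: sum_nonneg Wy_nonneg)
  ultimately show ?thesis unfolding GG_def by (simp add: algebra_simps)
qed

lemma GG_cvx:
  assumes "0 \<le> \<omega>" "\<omega> \<le> 1" "0 \<le> u" "u \<le> 1"
  shows "GG \<omega> n (y(k:=(1-u)*a+u*b)) \<le> (1-u) * GG \<omega> n (y(k:=a)) + u * GG \<omega> n (y(k:=b))"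
proof -
  have 1: "\<omega> * Wy (y(k:=(1-u)*a+u*b)) n \<le> \<omega> * ((1-u) * Wy (y(k:=a)) n + u * Wy (y(k:=b)) n)"
    using assms by (intro mult_left_mono Wy_cvx) auto
  have "(\<Sum>i=1..n. Wy (y(k:=(1-u)*a+u*b)) i) \<le> (\<Sum>i=1..n. (1-u) * Wy (y(k:=a)) i + u * Wy (y(k:=b)) i)"
    using assms by (intro sum_mono Wy_cvx) auto
  then have 2: "(1-\<omega>) * (\<Sum>i=1..n. Wy (y(k:=(1-u)*a+u*b)) i) \<le> (1-\<omega>) * ((1-u) * (\<Sum>i=1..n. Wy (y(k:=a)) i) + u * (\<Sum>i=1..n. Wy (y(k:=b)) i))"
    using assms by (intro mult_left_mono) (auto simp: sum.distrib sum_distrib_left)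
  show ?thesis using 1 2 unfolding GG_def by (simp add: algebra_simps)
qed

lemma GG_measurable:
  assumes "\<And>j. (\<lambda>x. Y x j) \<in> borel_measurable N"
  shows "(\<lambda>x. GG \<omega> n (Y x)) \<in> borel_measurable N"
  unfolding GG_def using Wy_measurable[OF assms] by measurable

lemma GG_cong: "(\<And>j. 1 \<le> j \<Longrightarrow> j < n \<Longrightarrow> y j = y' j) \<Longrightarrow> GG \<omega> n y = GG \<omega> n y'"
  unfolding GG_def by (intro arg_cong2[where f="(+)"] arg_cong2[where f="(*)"] refl sum.cong Wy_cong) auto

locale sched = prob_space M for M :: "'s measure" +
  fixes B :: "nat \<Rightarrow> 's \<Rightarrow> real" and n :: nat and \<omega> :: real
  assumes n1: "n \<ge> 1" and w0: "0 \<le> \<omega>" and w1: "\<omega> \<le> 1"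
  and ind: "indep_vars (\<lambda>_. borel) B {1..n}"
  and intB: "\<And>i. i \<in> {1..n} \<Longrightarrow> integrable M (B i)"
  and dil: "\<And>i. 1 \<le> i \<Longrightarrow> i < n \<Longrightarrow> dil_le M (B i) (B (Suc i))"
begin

definition mu :: "nat \<Rightarrow> real" where "mu j = integral\<^sup>L M (B j)"

lemma int_phi:
  fixes \<phi> :: "real \<Rightarrow> real"
  assumes "\<phi> \<in> borel_measurable borel" "\<And>t. \<bar>\<phi> t\<bar> \<le> a + c * \<bar>t\<bar>" "i \<in> {1..n}"
  shows "integrable M (\<lambda>s. \<phi> (B i s - mu i))"
proof (rule Bochner_Integration.integrable_bound[where f="\<lambda>s. a + c * \<bar>B i s - mu i\<bar>"])
  show "integrable M (\<lambda>s. a + c * \<bar>B i s - mu i\<bar>)"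
    using intB[OF assms(3)] by auto
  show "(\<lambda>s. \<phi> (B i s - mu i)) \<in> borel_measurable M"
    using intB[OF assms(3)] assms(1) by measurable
  show "AE s in M. norm (\<phi> (B i s - mu i)) \<le> norm (a + c * \<bar>B i s - mu i\<bar>)"
    using assms(2) by (auto intro!: AE_I2 order_trans[OF _ abs_ge_self])
qed

lemma chain:
  fixes \<phi> :: "real \<Rightarrow> real"
  assumes "convex_on UNIV \<phi>" "\<phi> \<in> borel_measurable borel" "\<And>t. \<bar>\<phi> t\<bar> \<le> a + c * \<bar>t\<bar>"
    and "1 \<le> m" "m \<le> j" "j \<le> n"
  shows "integral\<^sup>L M (\<lambda>s. \<phi> (B m s - mu m)) \<le> integral\<^sup>L M (\<lambda>s. \<phi> (B j s - mu j))"
  using assms(5,6)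
proof (induction j rule: dec_induct)
  case base then show ?case by simp
next
  case (step j)
  have "integral\<^sup>L M (\<lambda>s. \<phi> (B j s - mu j)) \<le> integral\<^sup>L M (\<lambda>s. \<phi> (B (Suc j) s - mu (Suc j)))"
    using dil[of j] step assms int_phi[OF assms(2,3), of j] int_phi[OF assms(2,3), of "Suc j"]
    unfolding dil_le_def cx_le_def mu_def by auto
  with step show ?case by simp
qed

end



lemma indep_fubini:
  assumes "prob_space M" "prob_space.indep_var M N1 X N2 Y" "f \<in> borel_measurable (N1 \<Otimes>\<^sub>M N2)"
  shows "(\<integral>\<^sup>+ s. f (X s, Y s) \<partial>M) = (\<integral>\<^sup>+ x. (\<integral>\<^sup>+ s. f (x, Y s) \<partial>M) \<partial>(distr M N1 X))"
proof -
  interpret prob_space M by fact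
  have X: "X \<in> measurable M N1" using assms(2) by (rule indep_var_rv1)
  have Y: "Y \<in> measurable M N2" using assms(2) by (rule indep_var_rv2)
  have eq: "distr M N1 X \<Otimes>\<^sub>M distr M N2 Y = distr M (N1 \<Otimes>\<^sub>M N2) (\<lambda>x. (X x, Y x))"
    using assms(2) indep_var_distribution_eq by blast
  interpret PX: prob_space "distr M N1 X" by (rule prob_space_distr[OF X])
  interpret PY: prob_space "distr M N2 Y" by (rule prob_space_distr[OF Y])
  have "(\<integral>\<^sup>+ s. f (X s, Y s) \<partial>M) = (\<integral>\<^sup>+ p. f p \<partial>(distr M (N1 \<Otimes>\<^sub>M N2) (\<lambda>x. (X x, Y x))))"
    by (subst nn_integral_distr) (auto intro: measurable_Pair X Y assms(3))
  also have "\<dots> = (\<integral>\<^sup>+ p. f p \<partial>(distr M N1 X \<Otimes>\<^sub>M distr M N2 Y))" by (simp add: eq)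
  also have "\<dots> = (\<integral>\<^sup>+ x. (\<integral>\<^sup>+ y. f (x, y) \<partial>(distr M N2 Y)) \<partial>(distr M N1 X))"
  proof (rule PY.nn_integral_fst[symmetric])
    show "f \<in> borel_measurable (distr M N1 X \<Otimes>\<^sub>M distr M N2 Y)"
      using assms(3) by (subst measurable_cong_sets[OF sets_pair_measure_cong[OF sets_distr sets_distr] refl])
  qed
  also have "\<dots> = (\<integral>\<^sup>+ x. (\<integral>\<^sup>+ s. f (x, Y s) \<partial>M) \<partial>(distr M N1 X))"
    by (intro nn_integral_cong) (simp add: nn_integral_distr Y measurable_Pair2[OF assms(3)])
  finally show ?thesis .
qed

context sched
begin

definition Yp :: "(nat \<Rightarrow> nat) \<Rightarrow> 's \<Rightarrow> nat \<Rightarrow> real" where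
  "Yp p s j = (if j \<in> {1..n} then B (p j) s - mu (p j) else 0)"

lemma Yp_int:
  assumes "p permutes {1..n}"
  shows "integrable M (\<lambda>s. Yp p s j)"
proof (cases "j \<in> {1..n}")
  case True
  then have "p j \<in> {1..n}" by (simp only: permutes_in_image[OF assms])
  then have "integrable M (B (p j))" using intB by blast
  then show ?thesis using True unfolding Yp_def by simp
qed (auto simp: Yp_def)

lemma Yp_int0:
  assumes "p permutes {1..n}"
  shows "integral\<^sup>L M (\<lambda>s. Yp p s j) = 0"
proof (cases "j \<in> {1..n}")
  case True
  then have "p j \<in> {1..n}" by (simp only: permutes_in_image[OF assms])
  then have "integrable M (B (p j))" using intB by blast
  then show ?thesis using True unfolding Yp_def mu_def by (simp add: prob_space)
qed (auto simp: Yp_def)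

lemma Wy_int:
  assumes "p permutes {1..n}"
  shows "integrable M (\<lambda>s. Wy (Yp p s) i)"
proof (rule Bochner_Integration.integrable_bound[where f="\<lambda>s. \<Sum>j\<in>{1..<i}. \<bar>Yp p s j\<bar>"])
  show "integrable M (\<lambda>s. \<Sum>j\<in>{1..<i}. \<bar>Yp p s j\<bar>)"
    by (intro Bochner_Integration.integrable_sum integrable_abs Yp_int[OF assms])
  show "(\<lambda>s. Wy (Yp p s) i) \<in> borel_measurable M"
    by (intro Wy_measurable borel_measurable_integrable Yp_int[OF assms])
  show "AE s in M. norm (Wy (Yp p s) i) \<le> norm (\<Sum>j\<in>{1..<i}. \<bar>Yp p s j\<bar>)"
  proof (intro AE_I2)
    fix s
    have "Wy (Yp p s) i \<le> (\<Sum>j\<in>{1..<i}. \<bar>Yp p s j\<bar>)" by (rule Wy_bound2)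
    moreover have "0 \<le> Wy (Yp p s) i" by (rule Wy_nonneg)
    moreover have "0 \<le> (\<Sum>j\<in>{1..<i}. \<bar>Yp p s j\<bar>)" by (simp add: sum_nonneg)
    ultimately show "norm (Wy (Yp p s) i) \<le> norm (\<Sum>j\<in>{1..<i}. \<bar>Yp p s j\<bar>)"
      unfolding real_norm_def by (metis abs_of_nonneg)
  qed
qed

lemma GG_int:
  assumes "p permutes {1..n}"
  shows "integrable M (\<lambda>s. GG \<omega> n (Yp p s))"
  unfolding GG_def
  apply (rule Bochner_Integration.integrable_add)
   apply (rule integrable_mult_right)
   apply (rule Wy_int[OF assms])
  apply (rule integrable_mult_right)
  apply (rule Bochner_Integration.integrable_sum)
  apply (rule Wy_int[OF assms])
  done

lemma wt_eq:
  assumes "i \<le> n"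
  shows "wt p (\<lambda>j. integral\<^sup>L M (B j)) (\<lambda>j. B j s) i = Wy (Yp p s) i"
  unfolding wt_Wy using assms by (intro Wy_cong) (auto simp: Yp_def mu_def)

lemma idl_eq:
  assumes "1 \<le> i" "i < n"
  shows "idl p (\<lambda>j. integral\<^sup>L M (B j)) (\<lambda>j. B j s) (Suc i) = Wy (Yp p s) (Suc i) - Wy (Yp p s) i - Yp p s i"
proof -
  have "idl p (\<lambda>j. integral\<^sup>L M (B j)) (\<lambda>j. B j s) (Suc i) =
     wt p (\<lambda>j. integral\<^sup>L M (B j)) (\<lambda>j. B j s) (Suc i) - wt p (\<lambda>j. integral\<^sup>L M (B j)) (\<lambda>j. B j s) i
      - (B (p i) s - integral\<^sup>L M (B (p i)))"
    using assms by auto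
  also have "\<dots> = Wy (Yp p s) (Suc i) - Wy (Yp p s) i - Yp p s i"
    using assms by (simp add: wt_eq Yp_def mu_def)
  finally show ?thesis .
qed

lemma cost_eq:
  assumes p: "p permutes {1..n}"
  shows "cost M B n p (\<lambda>j. integral\<^sup>L M (B j)) \<omega> = integral\<^sup>L M (\<lambda>s. GG \<omega> n (Yp p s))"
proof -
  let ?W = "\<lambda>i. integral\<^sup>L M (\<lambda>s. Wy (Yp p s) i)"
  have idl: "(\<Sum>i=1..m. integral\<^sup>L M (\<lambda>s. idl p (\<lambda>j. integral\<^sup>L M (B j)) (\<lambda>j. B j s) i)) = ?W m"
    if "1 \<le> m" "m \<le> n" for m
    using that
  proof (induction m rule: dec_induct)
    case base then show ?case by simp
  next
    case (step m)
    have "integral\<^sup>L M (\<lambda>s. idl p (\<lambda>j. integral\<^sup>L M (B j)) (\<lambda>j. B j s) (Suc m))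
        = integral\<^sup>L M (\<lambda>s. Wy (Yp p s) (Suc m) - Wy (Yp p s) m - Yp p s m)"
      using step by (simp add: idl_eq del: idl.simps)
    also have "\<dots> = ?W (Suc m) - ?W m - 0"
      using Wy_int[OF p] Yp_int[OF p] Yp_int0[OF p] by (simp del: Wy.simps)
    finally show ?case using step by simp
  qed
  have wt: "(\<Sum>i=1..n. integral\<^sup>L M (\<lambda>s. wt p (\<lambda>j. integral\<^sup>L M (B j)) (\<lambda>j. B j s) i)) = (\<Sum>i=1..n. ?W i)"
    by (intro sum.cong refl) (simp add: wt_eq del: wt.simps)
  have "cost M B n p (\<lambda>j. integral\<^sup>L M (B j)) \<omega> = \<omega> * ?W n + (1 - \<omega>) * (\<Sum>i=1..n. ?W i)"
    unfolding cost_def idl[OF n1 order_refl] wt ..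
  also have "\<dots> = integral\<^sup>L M (\<lambda>s. GG \<omega> n (Yp p s))"
    unfolding GG_def using Wy_int[OF p] by simp
  finally show ?thesis .
qed

end



context sched
begin

lemma swap:
  assumes tau: "\<tau> permutes {1..n}" and k: "1 \<le> k" "k < n" "\<tau> k = n"
  shows "integral\<^sup>L M (\<lambda>s. GG \<omega> n (Yp (\<tau> \<circ> Transposition.transpose k n) s))
       \<le> integral\<^sup>L M (\<lambda>s. GG \<omega> n (Yp \<tau> s))"
proof -
  define m where "m = \<tau> n"
  define \<sigma> where "\<sigma> = \<tau> \<circ> Transposition.transpose k n"
  have nS: "n \<in> {1..n}" using n1 by auto
  have kS: "k \<in> {1..n}" using k by auto
  have mS: "m \<in> {1..n}" unfolding m_def using nS by (simp only: permutes_in_image[OF tau])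
  have inj: "\<And>a b. \<tau> a = \<tau> b \<Longrightarrow> a = b" using permutes_inj[OF tau] by (simp add: inj_eq)
  have mn: "m \<noteq> n" unfolding m_def using k(2,3) inj by fastforce
  have mle: "1 \<le> m" "m \<le> n" using mS by auto
  define J where "J = {1..n} - {m, n}"
  define Z where "Z = (\<lambda>s. restrict (\<lambda>j. B j s) J)"
  define yF where "yF = (\<lambda>(z::nat \<Rightarrow> real) t j. if j = k then t else if \<tau> j \<in> J then z (\<tau> j) - mu (\<tau> j) else 0)"
  define F where "F = (\<lambda>z t. GG \<omega> n (yF z t))"
  have tJ: "\<tau> j \<in> J" if "1 \<le> j" "j < n" "j \<noteq> k" for j
  proof -
    have "j \<in> {1..n}" using that by simp
    then have "\<tau> j \<in> {1..n}" by (simp only: permutes_in_image[OF tau])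
    moreover have "\<tau> j \<noteq> n" using that k inj by metis
    moreover have "\<tau> j \<noteq> m" using that inj unfolding m_def by fastforce
    ultimately show ?thesis unfolding J_def by auto
  qed
  have FA: "GG \<omega> n (Yp \<tau> s) = F (Z s) (B n s - mu n)" for s
    unfolding F_def by (intro GG_cong) (auto simp: Yp_def yF_def Z_def k tJ)
  have FB: "GG \<omega> n (Yp \<sigma> s) = F (Z s) (B m s - mu m)" for s
  proof -
    have "\<sigma> j = \<tau> j" if "j \<noteq> k" "j \<noteq> n" for j
      using that unfolding \<sigma>_def by (simp add: transpose_def)
    moreover have "\<sigma> k = m" unfolding \<sigma>_def m_def by simp
    ultimately show ?thesis
      unfolding F_def by (intro GG_cong) (auto simp: Yp_def yF_def Z_def k tJ)
  qed
  have indq: "indep_var (PiM J (\<lambda>_. borel)) Z (PiM {q} (\<lambda>_. borel)) (\<lambda>s. restrict (\<lambda>i. B i s) {q})"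
    if "q \<in> {m, n}" for q
    unfolding Z_def
    by (rule indep_var_restrict[OF ind]) (use that mS nS in \<open>auto simp: J_def\<close>)
  have yF_meas: "(\<lambda>p. yF (fst p) (snd p q - mu q) j) \<in> borel_measurable (PiM J (\<lambda>_. borel) \<Otimes>\<^sub>M PiM {q} (\<lambda>_. borel))" for q j
  proof (cases "j = k")
    case True
    have "(\<lambda>p. snd p q) \<in> borel_measurable (PiM J (\<lambda>_. borel) \<Otimes>\<^sub>M PiM {q} (\<lambda>_. borel))"
      by measurable
    then show ?thesis using True unfolding yF_def by simp
  next
    case False
    show ?thesis
    proof (cases "\<tau> j \<in> J")
      case True
      have "(\<lambda>p. fst p (\<tau> j)) \<in> borel_measurable (PiM J (\<lambda>_. borel) \<Otimes>\<^sub>M PiM {q} (\<lambda>_. borel))"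
        using True by measurable
      then show ?thesis using False True unfolding yF_def by simp
    qed (use False in \<open>simp add: yF_def\<close>)
  qed
  have Fmeas: "(\<lambda>p. ennreal (F (fst p) (snd p q - mu q))) \<in> borel_measurable (PiM J (\<lambda>_. borel) \<Otimes>\<^sub>M PiM {q} (\<lambda>_. borel))" for q
    unfolding F_def using GG_measurable[OF yF_meas] by measurable
  have yF_upd: "yF z t = (yF z 0)(k := t)" for z t
    unfolding yF_def by auto
  have Fe: "F z t = GG \<omega> n ((yF z 0)(k := t))" for z t
    unfolding F_def by (subst yF_upd) (rule refl)
  have Fz_cvx: "convex_on UNIV (F z)" for z
  proof (rule convex_onI)
    fix u x y :: real assume "0 < u" "u < 1"
    then show "F z ((1 - u) *\<^sub>R x + u *\<^sub>R y) \<le> (1 - u) * F z x + u * F z y"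
      unfolding Fe using GG_cvx[OF w0 w1, where u=u and y="yF z 0" and k=k and a=x and b=y and n=n] by simp
  qed simp
  have Fz_meas: "F z \<in> borel_measurable borel" for z
  proof -
    have "(\<lambda>t. yF z t j) \<in> borel_measurable borel" for j
      unfolding yF_def by simp
    then show ?thesis unfolding F_def using GG_measurable[of "\<lambda>t. yF z t" borel] by blast
  qed
  have Fz_nonneg: "0 \<le> F z t" for z t unfolding F_def using GG_nonneg[OF w0 w1] .
  define a where "a = (\<lambda>z. real (Suc n) * (\<Sum>j\<in>{1..<n}. \<bar>yF z 0 j\<bar>))"
  define c where "c = real (Suc n) * real n"
  have Fz_bnd: "\<bar>F z t\<bar> \<le> a z + c * \<bar>t\<bar>" for z t
  proof -
    have "\<bar>F z t\<bar> = F z t" using Fz_nonneg by simp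
    also have "\<dots> \<le> real (Suc n) * (\<Sum>j\<in>{1..<n}. \<bar>yF z t j\<bar>)"
      unfolding F_def by (rule GG_bound[OF w0 w1])
    also have "\<dots> \<le> real (Suc n) * (\<Sum>j\<in>{1..<n}. \<bar>yF z 0 j\<bar> + \<bar>t\<bar>)"
      by (intro mult_left_mono sum_mono) (auto simp: yF_def)
    also have "\<dots> = a z + real (Suc n) * (real (n - 1) * \<bar>t\<bar>)"
      unfolding a_def by (simp add: sum.distrib algebra_simps)
    also have "\<dots> \<le> a z + c * \<bar>t\<bar>"
    proof -
      have "real (n - 1) * \<bar>t\<bar> \<le> real n * \<bar>t\<bar>" by (intro mult_right_mono) auto
      then have "real (Suc n) * (real (n - 1) * \<bar>t\<bar>) \<le> real (Suc n) * (real n * \<bar>t\<bar>)"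
        by (intro mult_left_mono) auto
      then show ?thesis unfolding c_def by (simp add: mult.assoc)
    qed
    finally show ?thesis .
  qed
  have inner: "(\<integral>\<^sup>+ s. ennreal (F z (B m s - mu m)) \<partial>M) \<le> (\<integral>\<^sup>+ s. ennreal (F z (B n s - mu n)) \<partial>M)" for z
  proof -
    have im: "integrable M (\<lambda>s. F z (B m s - mu m))" by (rule int_phi[OF Fz_meas Fz_bnd mS])
    have iN: "integrable M (\<lambda>s. F z (B n s - mu n))" by (rule int_phi[OF Fz_meas Fz_bnd nS])
    have "integral\<^sup>L M (\<lambda>s. F z (B m s - mu m)) \<le> integral\<^sup>L M (\<lambda>s. F z (B n s - mu n))"
      by (rule chain[OF Fz_cvx Fz_meas Fz_bnd mle order_refl])
    then show ?thesis
      by (subst (1 2) nn_integral_eq_integral) (auto simp: im iN Fz_nonneg intro: ennreal_leI)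
  qed
  have "(\<integral>\<^sup>+ s. ennreal (GG \<omega> n (Yp \<sigma> s)) \<partial>M) = (\<integral>\<^sup>+ s. ennreal (F (Z s) (B m s - mu m)) \<partial>M)"
    by (simp add: FB)
  also have "\<dots> = (\<integral>\<^sup>+ z. (\<integral>\<^sup>+ s. ennreal (F z (B m s - mu m)) \<partial>M) \<partial>(distr M (PiM J (\<lambda>_. borel)) Z))"
    using indep_fubini[OF prob_space_axioms indq[of m] Fmeas[of m]] by simp
  also have "\<dots> \<le> (\<integral>\<^sup>+ z. (\<integral>\<^sup>+ s. ennreal (F z (B n s - mu n)) \<partial>M) \<partial>(distr M (PiM J (\<lambda>_. borel)) Z))"
    by (intro nn_integral_mono inner)
  also have "\<dots> = (\<integral>\<^sup>+ s. ennreal (F (Z s) (B n s - mu n)) \<partial>M)"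
    using indep_fubini[OF prob_space_axioms indq[of n] Fmeas[of n]] by simp
  also have "\<dots> = (\<integral>\<^sup>+ s. ennreal (GG \<omega> n (Yp \<tau> s)) \<partial>M)"
    by (simp add: FA)
  finally have le: "(\<integral>\<^sup>+ s. ennreal (GG \<omega> n (Yp \<sigma> s)) \<partial>M) \<le> (\<integral>\<^sup>+ s. ennreal (GG \<omega> n (Yp \<tau> s)) \<partial>M)" .
  have sig: "\<sigma> permutes {1..n}" unfolding \<sigma>_def
    by (rule permutes_compose[OF permutes_swap_id[OF kS nS] tau])
  have "ennreal (integral\<^sup>L M (\<lambda>s. GG \<omega> n (Yp \<sigma> s))) \<le> ennreal (integral\<^sup>L M (\<lambda>s. GG \<omega> n (Yp \<tau> s)))"
    using le by (subst (asm) (1 2) nn_integral_eq_integral) (auto simp: GG_int[OF sig] GG_int[OF tau] GG_nonneg w0 w1)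
  moreover have "0 \<le> integral\<^sup>L M (\<lambda>s. GG \<omega> n (Yp \<tau> s))"
    by (intro integral_nonneg_AE AE_I2 GG_nonneg w0 w1)
  ultimately show ?thesis unfolding \<sigma>_def by (simp add: ennreal_le_iff)
qed

end



theorem propositionE1:
  fixes M :: "'s measure" and B :: "nat \<Rightarrow> 's \<Rightarrow> real" and n :: nat and \<omega> :: real
  assumes "prob_space M"
    and "n \<ge> 1"
    and "0 < \<omega>" and "\<omega> < 1"
    and "prob_space.indep_vars M (\<lambda>_. borel) B {1..n}"
    and "\<And>i. i \<in> {1..n} \<Longrightarrow> integrable M (B i)"
    and "\<And>i. i \<in> {1..n} \<Longrightarrow> integrable M (\<lambda>s. (B i s)\<^sup>2)"
    and "\<And>i. 1 \<le> i \<Longrightarrow> i < n \<Longrightarrow> dil_le M (B i) (B (Suc i))"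
  shows "\<exists>\<tau>. \<tau> permutes {1..n}
            \<and> (\<forall>\<sigma>. \<sigma> permutes {1..n} \<longrightarrow>
                 cost M B n \<tau> (\<lambda>j. integral\<^sup>L M (B j)) \<omega>
                   \<le> cost M B n \<sigma> (\<lambda>j. integral\<^sup>L M (B j)) \<omega>)
            \<and> \<tau> n = n"
proof -
  interpret sched M B n \<omega>
  proof (rule sched.intro)
    show "prob_space M" by fact
    show "sched_axioms M B n \<omega>"
      by (rule sched_axioms.intro) (use assms in auto)
  qed
  let ?P = "{\<sigma>. \<sigma> permutes {1..n}}"
  let ?c = "\<lambda>\<sigma>. cost M B n \<sigma> (\<lambda>j. integral\<^sup>L M (B j)) \<omega>"
  have fin: "finite ?P" by (rule finite_permutations) simp
  have ne: "?c ` ?P \<noteq> {}" using permutes_id by blast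
  obtain x where x: "x \<in> ?c ` ?P" and xmin: "\<not> (\<exists>y\<in>?c ` ?P. y < x)"
    using ex_min_if_finite[OF finite_imageI[OF fin] ne] by blast
  then obtain \<tau>0 where t0: "\<tau>0 permutes {1..n}" and xe: "x = ?c \<tau>0" by blast
  have min: "?c \<tau>0 \<le> ?c \<sigma>" if "\<sigma> permutes {1..n}" for \<sigma>
    using xmin that xe by (auto simp: not_less)
  show ?thesis
  proof (cases "\<tau>0 n = n")
    case True then show ?thesis using t0 min by blast
  next
    case False
    define k where "k = inv \<tau>0 n"
    have nS: "n \<in> {1..n}" using assms(2) by simp
    have tk: "\<tau>0 k = n" unfolding k_def by (rule permutes_inverses(1)[OF t0])
    have kS: "k \<in> {1..n}" unfolding k_def using nS by (simp only: permutes_in_image[OF permutes_inv[OF t0]])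
    have kn: "k \<noteq> n" using False tk by auto
    have k1: "1 \<le> k" "k < n" using kS kn by auto
    define \<sigma> where "\<sigma> = \<tau>0 \<circ> Transposition.transpose k n"
    have sig: "\<sigma> permutes {1..n}" unfolding \<sigma>_def
      by (rule permutes_compose[OF permutes_swap_id[OF kS nS] t0])
    have sn: "\<sigma> n = n" unfolding \<sigma>_def using tk by simp
    have "?c \<sigma> \<le> ?c \<tau>0"
      using cost_eq[OF sig] cost_eq[OF t0] swap[OF t0 k1 tk] by (simp add: \<sigma>_def)
    then have "\<forall>\<rho>. \<rho> permutes {1..n} \<longrightarrow> ?c \<sigma> \<le> ?c \<rho>"
      using min by (auto intro: order_trans)
    then show ?thesis using sig sn by blast
  qed
qed


end
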